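(* For every $M\in\mathbb N$, every prime power $q$ and every $\varepsilon>0$, for almost all $a\in(\mathbb F_q^M)^\infty$ (uniform product measure), $$-\varepsilon<\liminf_{n\to\infty}\frac{d_a(n)}{n}\le\limsup_{n\to\infty}\frac{d_a(n)}{n}<\varepsilon.$$
   Context: Let $q$ be a prime power and $M\ge1$. For $a=(a_{k,m})_{k\ge1,\,1\le m\le M}\in(\mathbb F_q^M)^\infty$ and $n\in\mathbb N_0$, $L_a(n)$ is the least $L\ge0$ such that there exist $c_1,\dots,c_L\in\mathbb F_q$ with $a_{k,m}=\sum_{i=1}^L c_i a_{k-i,m}$ for all $L<k\le n$ and all $1\le m\le M$; $L_a(0)=0$. The linear complexity deviation is $d_a(n)=L_a(n)-\lceil nM/(M+1)\rceil$. *)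

theory Defs
  imports "HOL-Probability.Probability"
begin

text \<open>A multi-sequence a over the finite field 'f: a k m for k \<ge> 1 and 1 \<le> m \<le> M
  (values at k = 0 or outside 1..M are irrelevant).\<close>

definition lin_rec :: "nat \<Rightarrow> (nat \<Rightarrow> nat \<Rightarrow> 'f::field) \<Rightarrow> nat \<Rightarrow> nat \<Rightarrow> bool" where
  "lin_rec M a n L \<longleftrightarrow> (\<exists>c :: nat \<Rightarrow> 'f. \<forall>k. L < k \<and> k \<le> n \<longrightarrow>
      (\<forall>m\<in>{1..M}. a k m = (\<Sum>i=1..L. c i * a (k - i) m)))"

definition lin_compl :: "nat \<Rightarrow> (nat \<Rightarrow> nat \<Rightarrow> 'f::field) \<Rightarrow> nat \<Rightarrow> nat" where
  "lin_compl M a n = (LEAST L. lin_rec M a n L)"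

definition lc_dev :: "nat \<Rightarrow> (nat \<Rightarrow> nat \<Rightarrow> 'f::field) \<Rightarrow> nat \<Rightarrow> int" where
  "lc_dev M a n = int (lin_compl M a n) - \<lceil>real (n * M) / real (M + 1)\<rceil>"

definition seq_measure :: "nat \<Rightarrow> (nat \<Rightarrow> nat \<Rightarrow> 'f::finite) measure" where
  "seq_measure M = PiM (UNIV :: nat set)
     (\<lambda>_. PiM {1..M} (\<lambda>_. uniform_count_measure (UNIV :: 'f set)))"

end

theory Submission
  imports Defs
begin

lemma lin_rec_triv: "n \<le> L \<Longrightarrow> lin_rec M a n L"
  unfolding lin_rec_def by auto

lemma lin_rec_mono:
  assumes "lin_rec M a n L'" "L' \<le> L" shows "lin_rec M a n L"
proof -
  obtain c where c: "\<forall>k. L' < k \<and> k \<le> n \<longrightarrow> (\<forall>m\<in>{1..M}. a k m = (\<Sum>i=1..L'. c i * a (k - i) m))"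
    using assms(1) unfolding lin_rec_def by blast
  define c' where "c' i = (if i \<le> L' then c i else 0)" for i
  have "(\<Sum>i=1..L. c' i * a (k - i) m) = (\<Sum>i=1..L'. c i * a (k - i) m)" for k m
  proof -
    have "(\<Sum>i=1..L. c' i * a (k - i) m) = (\<Sum>i\<in>{1..L'} \<union> {L'<..L}. c' i * a (k - i) m)"
      using assms(2) by (intro sum.cong) auto
    also have "\<dots> = (\<Sum>i=1..L'. c' i * a (k - i) m) + (\<Sum>i\<in>{L'<..L}. c' i * a (k - i) m)"
      by (intro sum.union_disjoint) auto
    also have "(\<Sum>i\<in>{L'<..L}. c' i * a (k - i) m) = 0" by (intro sum.neutral) (auto simp: c'_def)
    also have "(\<Sum>i=1..L'. c' i * a (k - i) m) = (\<Sum>i=1..L'. c i * a (k - i) m)"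
      by (intro sum.cong) (auto simp: c'_def)
    finally show ?thesis by simp
  qed
  then show ?thesis unfolding lin_rec_def using c assms(2) by (intro exI[of _ c']) auto
qed

lemma lin_rec_restrict: "lin_rec M a n L \<longleftrightarrow> lin_rec M (restrict a {1..n}) n L"
proof -
  have "(\<Sum>i=1..L. c i * restrict a {1..n} (k - i) m) = (\<Sum>i=1..L. c i * a (k - i) m)"
    if "L < k" "k \<le> n" for k m and c :: "nat \<Rightarrow> 'a"
    using that by (intro sum.cong) auto
  moreover have "restrict a {1..n} k = a k" if "L < k" "k \<le> n" for k
    using that by auto
  ultimately have "(\<forall>k. L < k \<and> k \<le> n \<longrightarrow> (\<forall>m\<in>{1..M}. a k m = (\<Sum>i=1..L. c i * a (k - i) m))) \<longleftrightarrow>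
     (\<forall>k. L < k \<and> k \<le> n \<longrightarrow> (\<forall>m\<in>{1..M}. restrict a {1..n} k m = (\<Sum>i=1..L. c i * restrict a {1..n} (k - i) m)))"
    for c by auto
  then show ?thesis unfolding lin_rec_def by blast
qed

lemma lin_compl_le: "lin_rec M a n L \<Longrightarrow> lin_compl M a n \<le> L"
  unfolding lin_compl_def by (rule Least_le)

lemma lin_compl_gt: assumes "\<not> lin_rec M a n L" shows "L < lin_compl M a n"
proof (rule ccontr)
  assume "\<not> L < lin_compl M a n"
  moreover have "lin_rec M a n (lin_compl M a n)"
    unfolding lin_compl_def by (rule LeastI[of _ n]) (rule lin_rec_triv, simp)
  ultimately show False using assms lin_rec_mono by (metis not_less)
qed

lemma duality:
  fixes A :: "'r \<Rightarrow> 'j \<Rightarrow> 'f::field"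
  assumes "finite R" "finite J"
    and "\<And>y. (\<forall>j\<in>J. (\<Sum>r\<in>R. y r * A r j) = 0) \<Longrightarrow> (\<forall>r\<in>R. y r = 0)"
  shows "\<exists>c. \<forall>r\<in>R. (\<Sum>j\<in>J. A r j * c j) = b r"
  using assms(1,3)
proof (induction R arbitrary: A b rule: finite_induct)
  case empty then show ?case by simp
next
  case (insert r0 R A b)
  have "\<exists>j0\<in>J. A r0 j0 \<noteq> 0"
  proof (rule ccontr)
    assume "\<not> ?thesis"
    then have "\<forall>j\<in>J. (\<Sum>r\<in>insert r0 R. (if r = r0 then 1 else 0) * A r j) = 0"
      using insert(1,2) by (auto intro!: sum.neutral)
    then show False using insert(4)[of "\<lambda>r. if r = r0 then 1 else 0"] by auto
  qed
  then obtain j0 where j0: "j0 \<in> J" "A r0 j0 \<noteq> 0" by blast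
  define p where "p = A r0 j0"
  define A' where "A' r j = A r j - (A r j0 / p) * A r0 j" for r j
  define b' where "b' r = b r - (A r j0 / p) * b r0" for r
  have "\<exists>c. \<forall>r\<in>R. (\<Sum>j\<in>J. A' r j * c j) = b' r"
  proof (rule insert(3))
    fix y assume y: "\<forall>j\<in>J. (\<Sum>r\<in>R. y r * A' r j) = 0"
    define y' where "y' r = (if r = r0 then - (\<Sum>r\<in>R. y r * A r j0) / p else y r)" for r
    have "\<forall>j\<in>J. (\<Sum>r\<in>insert r0 R. y' r * A r j) = 0"
    proof
      fix j assume "j \<in> J"
      have "(\<Sum>r\<in>insert r0 R. y' r * A r j) = y' r0 * A r0 j + (\<Sum>r\<in>R. y r * A r j)"
        using insert(1,2) by (simp add: y'_def) (intro sum.cong, auto)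
      also have "\<dots> = (\<Sum>r\<in>R. y r * A' r j)"
        by (simp add: y'_def A'_def algebra_simps sum_subtractf sum_distrib_left sum_distrib_right
             sum_divide_distrib)
      finally show "(\<Sum>r\<in>insert r0 R. y' r * A r j) = 0" using y \<open>j \<in> J\<close> by simp
    qed
    then have "\<forall>r\<in>insert r0 R. y' r = 0" by (rule insert(4))
    then show "\<forall>r\<in>R. y r = 0" using insert(2) by (auto simp: y'_def split: if_splits)
  qed
  then obtain c where c: "\<forall>r\<in>R. (\<Sum>j\<in>J. A' r j * c j) = b' r" by blast
  define t where "t = (b r0 - (\<Sum>j\<in>J. A r0 j * c j)) / p"
  define c' where "c' j = c j + (if j = j0 then t else 0)" for j
  have sumc': "(\<Sum>j\<in>J. B j * c' j) = (\<Sum>j\<in>J. B j * c j) + B j0 * t" for B :: "'j \<Rightarrow> 'f"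
  proof -
    have "(\<Sum>j\<in>J. B j * c' j) = (\<Sum>j\<in>J. B j * c j + (if j = j0 then B j * t else 0))"
      by (intro sum.cong) (auto simp: c'_def algebra_simps)
    also have "\<dots> = (\<Sum>j\<in>J. B j * c j) + B j0 * t"
      using j0(1) assms(2) by (simp add: sum.distrib sum.delta)
    finally show ?thesis .
  qed
  have r0: "(\<Sum>j\<in>J. A r0 j * c' j) = b r0"
    using j0(2) by (simp add: sumc' t_def p_def)
  have "(\<Sum>j\<in>J. A r j * c' j) = b r" if "r \<in> R" for r
  proof -
    have "(\<Sum>j\<in>J. A r j * c' j) = (\<Sum>j\<in>J. A' r j * c' j) + (A r j0 / p) * (\<Sum>j\<in>J. A r0 j * c' j)"
      by (simp add: A'_def algebra_simps sum_subtractf sum_distrib_left)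
    also have "(\<Sum>j\<in>J. A' r j * c' j) = b' r"
      using c that j0(2) by (simp add: sumc' A'_def p_def)
    finally show ?thesis using r0 by (simp add: b'_def)
  qed
  then show ?case using r0 by (intro exI[of _ c']) auto
qed

definition Xs :: "nat \<Rightarrow> nat \<Rightarrow> (nat \<Rightarrow> nat \<Rightarrow> 'f) set" where
  "Xs M n = PiE {1..n} (\<lambda>_. PiE {1..M} (\<lambda>_. UNIV))"

lemma finite_Xs: "finite (Xs M n :: (nat \<Rightarrow> nat \<Rightarrow> 'f::finite) set)"
  unfolding Xs_def by (intro finite_PiE) auto

lemma card_Xs: "card (Xs M n :: (nat \<Rightarrow> nat \<Rightarrow> 'f::finite) set) = CARD('f) ^ (n * M)"
  unfolding Xs_def by (simp add: card_PiE power_mult mult.commute)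

lemma card_low:
  assumes "L \<le> n"
  shows "card {x \<in> (Xs M n :: (nat \<Rightarrow> nat \<Rightarrow> 'f::{finite,field}) set). lin_rec M x n L}
           \<le> CARD('f) ^ L * CARD('f) ^ (L * M)"
proof -
  define S where "S = {x \<in> (Xs M n :: (nat \<Rightarrow> nat \<Rightarrow> 'f) set). lin_rec M x n L}"
  define V where "V x c \<longleftrightarrow> (\<forall>k. L < k \<and> k \<le> n \<longrightarrow> (\<forall>m\<in>{1..M}. x k m = (\<Sum>i=1..L. c i * x (k - i) m)))"
    for x :: "nat \<Rightarrow> nat \<Rightarrow> 'f" and c
  define cf where "cf x = (SOME c. V x c)" for x
  have cf: "V x (cf x)" if "x \<in> S" for x
  proof -
    have "\<exists>c. V x c" using that unfolding S_def lin_rec_def V_def by auto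
    then show ?thesis unfolding cf_def by (rule someI_ex)
  qed
  define g where "g x = (restrict (cf x) {1..L}, restrict x {1..L})" for x
  define T where "T = (PiE {1..L} (\<lambda>_. UNIV :: 'f set)) \<times> (PiE {1..L} (\<lambda>_. PiE {1..M} (\<lambda>_. UNIV :: 'f set)))"
  have "inj_on g S"
  proof (rule inj_onI)
    fix x x' assume x: "x \<in> S" and x': "x' \<in> S" and gx: "g x = g x'"
    have Vx: "V x (cf x)" and Vx': "V x' (cf x')" using cf x x' by auto
    have cc: "cf x i = cf x' i" if "i \<in> {1..L}" for i
    proof -
      have "restrict (cf x) {1..L} i = restrict (cf x') {1..L} i" using gx by (simp add: g_def)
      then show ?thesis using that by simp
    qed
    have xx0: "x k = x' k" if "k \<in> {1..L}" for k
    proof -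
      have "restrict x {1..L} k = restrict x' {1..L} k" using gx by (simp add: g_def)
      then show ?thesis using that by simp
    qed
    have X: "x \<in> Xs M n" "x' \<in> Xs M n" using x x' S_def by auto
    have "x k = x' k" for k
    proof (induction k rule: less_induct)
      case (less k)
      show ?case
      proof (cases "k \<in> {1..n}")
        case False
        then show ?thesis using X unfolding Xs_def by (metis PiE_arb)
      next
        case True
        show ?thesis
        proof (cases "k \<le> L")
          case True then show ?thesis using xx0 \<open>k \<in> {1..n}\<close> by simp
        next
          case False
          show ?thesis
          proof (rule ext)
            fix m show "x k m = x' k m"
            proof (cases "m \<in> {1..M}")
              case False
              have xk: "x k \<in> PiE {1..M} (\<lambda>_. UNIV)" "x' k \<in> PiE {1..M} (\<lambda>_. UNIV)"
                using X \<open>k \<in> {1..n}\<close> unfolding Xs_def by auto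
              show ?thesis using PiE_arb[OF xk(1) False] PiE_arb[OF xk(2) False] by simp
            next
              case True
              have kk: "L < k \<and> k \<le> n" using False \<open>k \<in> {1..n}\<close> by auto
              have "x k m = (\<Sum>i=1..L. cf x i * x (k - i) m)"
                by (rule Vx[unfolded V_def, rule_format, OF kk True])
              also have "\<dots> = (\<Sum>i=1..L. cf x' i * x' (k - i) m)"
                using cc less False by (intro sum.cong) auto
              also have "\<dots> = x' k m"
                by (rule Vx'[unfolded V_def, rule_format, OF kk True, symmetric])
              finally show ?thesis .
            qed
          qed
        qed
      qed
    qed
    then show "x = x'" by (rule ext)
  qed
  moreover have "g ` S \<subseteq> T"
  proof
    fix z assume "z \<in> g ` S"
    then obtain x where x: "x \<in> S" "z = g x" by auto
    have "x \<in> Xs M n" using x S_def by auto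
    then have "\<forall>k\<in>{1..L}. x k \<in> PiE {1..M} (\<lambda>_. UNIV)"
      using assms unfolding Xs_def PiE_iff by auto
    then show "z \<in> T" using x unfolding g_def T_def by (simp add: restrict_PiE_iff)
  qed
  moreover have "finite T" unfolding T_def by (intro finite_cartesian_product finite_PiE) auto
  ultimately have "card S \<le> card T" by (rule card_inj_on_le)
  also have "card T = CARD('f) ^ L * CARD('f) ^ (L * M)"
    unfolding T_def by (simp add: card_cartesian_product card_PiE flip: power_mult) (simp add: mult.commute)
  finally show ?thesis unfolding S_def .
qed

lemma card_E:
  fixes y :: "nat \<times> nat \<Rightarrow> 'f::{finite,field}"
  assumes r1: "r1 \<in> {L<..n} \<times> {1..M}" "y r1 \<noteq> 0"
  shows "card {x \<in> (Xs M n :: (nat \<Rightarrow> nat \<Rightarrow> 'f) set).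
            \<forall>j\<in>{1..L}. (\<Sum>r\<in>{L<..n} \<times> {1..M}. y r * x (fst r - j) (snd r)) = 0} * CARD('f) ^ L
         \<le> CARD('f) ^ (n * M)"
proof -
  define R where "R = {L<..n} \<times> {1..M}"
  define E where "E = {x \<in> (Xs M n :: (nat \<Rightarrow> nat \<Rightarrow> 'f) set).
            \<forall>j\<in>{1..L}. (\<Sum>r\<in>R. y r * x (fst r - j) (snd r)) = 0}"
  define K where "K = {k. \<exists>m. (k, m) \<in> R \<and> y (k, m) \<noteq> 0}"
  have finK: "finite K" unfolding K_def R_def
    by (rule finite_subset[of _ "{L<..n}"]) auto
  have "fst r1 \<in> K" using r1 unfolding K_def R_def by (cases r1) auto
  then have Kne: "K \<noteq> {}" by auto
  define ks where "ks = Max K"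
  have "ks \<in> K" unfolding ks_def using finK Kne by (rule Max_in)
  then obtain ms where ms: "(ks, ms) \<in> R" "y (ks, ms) \<noteq> 0" unfolding K_def by auto
  have le: "k \<le> ks" if "(k, m) \<in> R" "y (k, m) \<noteq> 0" for k m
    unfolding ks_def using finK that by (intro Max_ge) (auto simp: K_def)
  have ks: "L < ks" "ks \<le> n" "ms \<in> {1..M}" using ms(1) unfolding R_def by auto
  define piv where "piv k \<longleftrightarrow> ks - L \<le> k \<and> k < ks" for k
  have piv_range: "k \<in> {1..n}" if "piv k" for k using that ks unfolding piv_def by auto
  define \<Phi> where "\<Phi> p = (\<lambda>k. if piv k then (fst p k)(ms := fst p k ms + snd p (ks - k)) else fst p k)"
    for p :: "(nat \<Rightarrow> nat \<Rightarrow> 'f) \<times> (nat \<Rightarrow> 'f)"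
  define T where "T = PiE {1..L} (\<lambda>_. UNIV :: 'f set)"
  have XsE: "x k \<in> PiE {1..M} (\<lambda>_. UNIV)" if "x \<in> Xs M n" "k \<in> {1..n}" for x :: "nat \<Rightarrow> nat \<Rightarrow> 'f" and k
    using that unfolding Xs_def by auto
  have XsU: "x k = undefined" if "x \<in> Xs M n" "k \<notin> {1..n}" for x :: "nat \<Rightarrow> nat \<Rightarrow> 'f" and k
    using that unfolding Xs_def by (metis PiE_arb)
  have XsU2: "x k m = undefined" if "x \<in> Xs M n" "k \<in> {1..n}" "m \<notin> {1..M}" for x :: "nat \<Rightarrow> nat \<Rightarrow> 'f" and k m
    using XsE[OF that(1,2)] that(3) by (metis PiE_arb)
  have img: "\<Phi> ` (E \<times> T) \<subseteq> Xs M n"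
  proof
    fix z assume "z \<in> \<Phi> ` (E \<times> T)"
    then obtain x t where xt: "x \<in> E" "t \<in> T" "z = \<Phi> (x, t)" by auto
    have X: "x \<in> Xs M n" using xt E_def by auto
    have "z k \<in> PiE {1..M} (\<lambda>_. UNIV)" if "k \<in> {1..n}" for k
    proof (cases "piv k")
      case True
      have "x k \<in> PiE {1..M} (\<lambda>_. UNIV)" using XsE[OF X that] .
      then show ?thesis using True ks(3) xt(3) unfolding \<Phi>_def PiE_iff extensional_def by auto
    next
      case False
      then show ?thesis using XsE[OF X that] xt(3) unfolding \<Phi>_def by simp
    qed
    moreover have "z k = undefined" if "k \<notin> {1..n}" for k
      using piv_range[of k] that XsU[OF X that] xt(3) unfolding \<Phi>_def by auto
    ultimately show "z \<in> Xs M n" unfolding Xs_def PiE_iff extensional_def by auto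
  qed
  have inj: "inj_on \<Phi> (E \<times> T)"
  proof (rule inj_onI)
    fix p p' assume p: "p \<in> E \<times> T" and p': "p' \<in> E \<times> T" and eq: "\<Phi> p = \<Phi> p'"
    obtain x t where xt: "p = (x, t)" "x \<in> E" "t \<in> T" using p by auto
    obtain x' t' where xt': "p' = (x', t')" "x' \<in> E" "t' \<in> T" using p' by auto
    have eqk: "\<Phi> (x, t) k m = \<Phi> (x', t') k m" for k m using eq xt xt' by simp
    have np: "x k m = x' k m" if "\<not> (piv k \<and> m = ms)" for k m
      using eqk[of k m] that unfolding \<Phi>_def by (auto split: if_splits)
    have Ex: "(\<Sum>r\<in>R. y r * x (fst r - j) (snd r)) = 0" if "j \<in> {1..L}" for j
      using xt(2) that unfolding E_def by auto
    have Ex': "(\<Sum>r\<in>R. y r * x' (fst r - j) (snd r)) = 0" if "j \<in> {1..L}" for j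
      using xt'(2) that unfolding E_def by auto
    have finR: "finite R" unfolding R_def by auto
    have "\<forall>m. x k m = x' k m" for k
    proof (induction k rule: less_induct)
      case (less k)
      show ?case
      proof (intro allI)
        fix m
        show "x k m = x' k m"
        proof (cases "piv k \<and> m = ms")
          case False then show ?thesis using np by blast
        next
          case True
          define j where "j = ks - k"
          have j: "j \<in> {1..L}" "k = ks - j" using True ks unfolding j_def piv_def by auto
          have split: "(\<Sum>r\<in>R. y r * z (fst r - j) (snd r)) =
              y (ks, ms) * z k ms + (\<Sum>r\<in>R - {(ks, ms)}. y r * z (fst r - j) (snd r))"
            for z :: "nat \<Rightarrow> nat \<Rightarrow> 'f"
            using sum.remove[OF finR ms(1), of "\<lambda>r. y r * z (fst r - j) (snd r)"] j(2) by simp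
          have rest: "(\<Sum>r\<in>R - {(ks, ms)}. y r * x (fst r - j) (snd r)) =
                      (\<Sum>r\<in>R - {(ks, ms)}. y r * x' (fst r - j) (snd r))"
          proof (rule sum.cong[OF refl])
            fix r assume r: "r \<in> R - {(ks, ms)}"
            obtain k1 m1 where r1: "r = (k1, m1)" by (cases r)
            show "y r * x (fst r - j) (snd r) = y r * x' (fst r - j) (snd r)"
            proof (cases "y r = 0")
              case True then show ?thesis by simp
            next
              case False
              have "k1 \<le> ks" using le[of k1 m1] r r1 False by auto
              have "k1 > L" using r r1 unfolding R_def by auto
              show ?thesis
              proof (cases "k1 < ks")
                case True
                have "k1 - j < k" using True j \<open>k1 > L\<close> by auto
                then show ?thesis using less r1 by simp
              next
                case False
                then have "k1 = ks" using \<open>k1 \<le> ks\<close> by auto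
                then have "m1 \<noteq> ms" using r r1 by auto
                then show ?thesis using np[of "k1 - j" m1] r1 \<open>k1 = ks\<close> j(2) by simp
              qed
            qed
          qed
          have e1: "y (ks, ms) * x k ms + (\<Sum>r\<in>R - {(ks, ms)}. y r * x' (fst r - j) (snd r)) = 0"
            using Ex[OF j(1)] split[of x] rest by simp
          have e2: "y (ks, ms) * x' k ms + (\<Sum>r\<in>R - {(ks, ms)}. y r * x' (fst r - j) (snd r)) = 0"
            using Ex'[OF j(1)] split[of x'] by simp
          have "y (ks, ms) * x k ms = y (ks, ms) * x' k ms"
          proof -
            have "y (ks, ms) * x k ms + (\<Sum>r\<in>R - {(ks, ms)}. y r * x' (fst r - j) (snd r)) =
                  y (ks, ms) * x' k ms + (\<Sum>r\<in>R - {(ks, ms)}. y r * x' (fst r - j) (snd r))"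
              using e1 e2 by simp
            then show ?thesis by simp
          qed
          then show ?thesis using ms(2) True by simp
        qed
      qed
    qed
    then have xx: "x = x'" by (intro ext) auto
    have "t = t'"
    proof (rule ext)
      fix j show "t j = t' j"
      proof (cases "j \<in> {1..L}")
        case False
        then show ?thesis using PiE_arb[of t "{1..L}" "\<lambda>_. UNIV" j] PiE_arb[of t' "{1..L}" "\<lambda>_. UNIV" j] xt(3) xt'(3) unfolding T_def by simp
      next
        case True
        have pk: "piv (ks - j)" "ks - (ks - j) = j" using True ks unfolding piv_def by auto
        have a: "\<Phi> (x, t) (ks - j) ms = x (ks - j) ms + t j" using pk unfolding \<Phi>_def by simp
        have b: "\<Phi> (x', t') (ks - j) ms = x' (ks - j) ms + t' j" using pk unfolding \<Phi>_def by simp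
        show ?thesis using a b eqk[of "ks - j" ms] xx by simp
      qed
    qed
    then show "p = p'" using xx xt xt' by simp
  qed
  have finXs: "finite (Xs M n :: (nat \<Rightarrow> nat \<Rightarrow> 'f) set)" by (rule finite_Xs)
  have "card (E \<times> T) \<le> card (Xs M n :: (nat \<Rightarrow> nat \<Rightarrow> 'f) set)"
    by (rule card_inj_on_le[OF inj img finXs])
  moreover have "card (E \<times> T) = card E * CARD('f) ^ L"
    unfolding T_def by (simp add: card_cartesian_product card_PiE)
  ultimately show ?thesis unfolding E_def R_def card_Xs by simp
qed

lemma card_high:
  "card {x \<in> (Xs M n :: (nat \<Rightarrow> nat \<Rightarrow> 'f::{finite,field}) set). \<not> lin_rec M x n L} * CARD('f) ^ L
     \<le> CARD('f) ^ ((n - L) * M) * CARD('f) ^ (n * M)"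
proof -
  define R where "R = {L<..n} \<times> {1..M}"
  define Y where "Y = {y \<in> PiE R (\<lambda>_. UNIV :: 'f set). \<exists>r\<in>R. y r \<noteq> 0}"
  define E where "E y = {x \<in> (Xs M n :: (nat \<Rightarrow> nat \<Rightarrow> 'f) set).
            \<forall>j\<in>{1..L}. (\<Sum>r\<in>R. y r * x (fst r - j) (snd r)) = 0}" for y
  define S where "S = {x \<in> (Xs M n :: (nat \<Rightarrow> nat \<Rightarrow> 'f) set). \<not> lin_rec M x n L}"
  have finR: "finite R" unfolding R_def by auto
  have finY: "finite Y" unfolding Y_def by (rule finite_subset[of _ "PiE R (\<lambda>_. UNIV)"]) (auto intro: finite_PiE finR)
  have sub: "S \<subseteq> (\<Union>y\<in>Y. E y)"
  proof
    fix x assume x: "x \<in> S"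
    show "x \<in> (\<Union>y\<in>Y. E y)"
    proof (rule ccontr)
      assume nx: "x \<notin> (\<Union>y\<in>Y. E y)"
      have "\<exists>c. \<forall>r\<in>R. (\<Sum>j\<in>{1..L}. x (fst r - j) (snd r) * c j) = x (fst r) (snd r)"
      proof (rule duality[OF finR])
        fix y :: "nat \<times> nat \<Rightarrow> 'f"
        assume y: "\<forall>j\<in>{1..L}. (\<Sum>r\<in>R. y r * x (fst r - j) (snd r)) = 0"
        show "\<forall>r\<in>R. y r = 0"
        proof (rule ccontr)
          assume "\<not> (\<forall>r\<in>R. y r = 0)"
          then have yY: "restrict y R \<in> Y" unfolding Y_def by auto
          have "(\<Sum>r\<in>R. restrict y R r * x (fst r - j) (snd r)) = (\<Sum>r\<in>R. y r * x (fst r - j) (snd r))" for j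
            by (intro sum.cong) auto
          then have "x \<in> E (restrict y R)" using y x unfolding E_def S_def by auto
          then show False using nx yY by auto
        qed
      qed auto
      then obtain c where c: "\<forall>r\<in>R. (\<Sum>j\<in>{1..L}. x (fst r - j) (snd r) * c j) = x (fst r) (snd r)" by blast
      have "lin_rec M x n L" unfolding lin_rec_def
      proof (intro exI[of _ c] allI impI ballI)
        fix k m assume k: "L < k \<and> k \<le> n" and m: "m \<in> {1..M}"
        have "(k, m) \<in> R" using k m unfolding R_def by auto
        then have "(\<Sum>j\<in>{1..L}. x (k - j) m * c j) = x k m" using c by fastforce
        then show "x k m = (\<Sum>i=1..L. c i * x (k - i) m)" by (simp add: mult.commute)
      qed
      then show False using x unfolding S_def by auto
    qed
  qed
  have finU: "finite (\<Union>y\<in>Y. E y)"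
    by (rule finite_subset[OF _ finite_Xs[where M=M and n=n]]) (auto simp: E_def)
  have "card S \<le> card (\<Union>y\<in>Y. E y)" by (rule card_mono[OF finU sub])
  also have "\<dots> \<le> (\<Sum>y\<in>Y. card (E y))" by (rule card_UN_le[OF finY])
  finally have "card S * CARD('f) ^ L \<le> (\<Sum>y\<in>Y. card (E y)) * CARD('f) ^ L" by simp
  also have "\<dots> = (\<Sum>y\<in>Y. card (E y) * CARD('f) ^ L)" by (simp add: sum_distrib_right)
  also have "\<dots> \<le> (\<Sum>y\<in>Y. CARD('f) ^ (n * M))"
  proof (rule sum_mono)
    fix y assume "y \<in> Y"
    then obtain r1 where "r1 \<in> R" "y r1 \<noteq> 0" unfolding Y_def by auto
    then show "card (E y) * CARD('f) ^ L \<le> CARD('f) ^ (n * M)"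
      using card_E[of r1 L n M y] unfolding E_def R_def by simp
  qed
  also have "\<dots> = card Y * CARD('f) ^ (n * M)" by simp
  also have "card Y \<le> card (PiE R (\<lambda>_. UNIV :: 'f set))"
    by (rule card_mono) (auto simp: Y_def intro: finite_PiE finR)
  also have "card (PiE R (\<lambda>_. UNIV :: 'f set)) = CARD('f) ^ ((n - L) * M)"
    by (simp add: card_PiE R_def card_cartesian_product)
  finally show ?thesis unfolding S_def by simp
qed

abbreviation QQ :: "nat \<Rightarrow> (nat \<Rightarrow> 'f) measure" where
  "QQ M \<equiv> PiM {1..M} (\<lambda>_. uniform_count_measure (UNIV :: 'f set))"

lemma prob_QQ: "prob_space (QQ M :: (nat \<Rightarrow> 'f::finite) measure)"
  by (intro prob_space_PiM prob_space_uniform_count_measure) auto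

lemma space_QQ: "space (QQ M :: (nat \<Rightarrow> 'f::finite) measure) = PiE {1..M} (\<lambda>_. UNIV)"
  by (simp add: space_PiM space_uniform_count_measure)

lemma singleton_PiE:
  assumes "x \<in> PiE I B" shows "{x} = PiE I (\<lambda>i. {x i})"
proof
  show "{x} \<subseteq> PiE I (\<lambda>i. {x i})" using assms by (auto simp: PiE_iff)
  show "PiE I (\<lambda>i. {x i}) \<subseteq> {x}"
  proof
    fix z assume z: "z \<in> PiE I (\<lambda>i. {x i})"
    have "z i = x i" for i
    proof (cases "i \<in> I")
      case True then show ?thesis using z by (auto simp: PiE_iff)
    next
      case False then show ?thesis using PiE_arb[OF z False] PiE_arb[OF assms False] by simp
    qed
    then show "z \<in> {x}" by auto
  qed
qed

lemma emeasure_QQ_single: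
  assumes "z \<in> space (QQ M :: (nat \<Rightarrow> 'f::finite) measure)"
  shows "{z} \<in> sets (QQ M :: (nat \<Rightarrow> 'f) measure)"
    "emeasure (QQ M :: (nat \<Rightarrow> 'f) measure) {z} = ennreal (1 / real CARD('f) ^ M)"
proof -
  interpret U: prob_space "uniform_count_measure (UNIV :: 'f set)"
    by (intro prob_space_uniform_count_measure) auto
  interpret product_sigma_finite "\<lambda>_::nat. uniform_count_measure (UNIV :: 'f set)"
    by (simp add: product_sigma_finite_def U.sigma_finite_measure_axioms)
  have z: "{z} = PiE {1..M} (\<lambda>m. {z m})" using assms space_QQ by (intro singleton_PiE) auto
  show "{z} \<in> sets (QQ M :: (nat \<Rightarrow> 'f) measure)"
    unfolding z by (intro sets_PiM_I_finite) (auto simp: sets_uniform_count_measure)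
  have "emeasure (QQ M :: (nat \<Rightarrow> 'f) measure) {z}
        = (\<Prod>m\<in>{1..M}. emeasure (uniform_count_measure (UNIV :: 'f set)) {z m})"
    unfolding z by (intro emeasure_PiM) (auto simp: sets_uniform_count_measure)
  also have "\<dots> = (\<Prod>m\<in>{1..M}. ennreal (1 / real CARD('f)))"
    by (intro prod.cong refl) (simp add: U.emeasure_eq_measure measure_uniform_count_measure)
  also have "\<dots> = ennreal (1 / real CARD('f) ^ M)"
    by (simp add: ennreal_power power_one_over)
  finally show "emeasure (QQ M :: (nat \<Rightarrow> 'f) measure) {z} = ennreal (1 / real CARD('f) ^ M)" .
qed

lemma space_PJ: "space (PiM {1..n} (\<lambda>_. QQ M :: (nat \<Rightarrow> 'f::finite) measure)) = Xs M n"
  by (simp add: space_PiM space_uniform_count_measure Xs_def)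

lemma PJ_facts:
  assumes "S \<subseteq> Xs M n"
  shows "S \<in> sets (PiM {1..n} (\<lambda>_. QQ M :: (nat \<Rightarrow> 'f::finite) measure))"
    "measure (PiM {1..n} (\<lambda>_. QQ M :: (nat \<Rightarrow> 'f::finite) measure)) S = real (card S) / real CARD('f) ^ (n * M)"
proof -
  let ?PJ = "PiM {1..n} (\<lambda>_. QQ M :: (nat \<Rightarrow> 'f::finite) measure)"
  interpret Q: prob_space "QQ M :: (nat \<Rightarrow> 'f) measure" by (rule prob_QQ)
  interpret product_sigma_finite "\<lambda>_::nat. QQ M :: (nat \<Rightarrow> 'f) measure"
    unfolding product_sigma_finite_def using Q.sigma_finite_measure_axioms by blast
  have single: "{x} \<in> sets ?PJ" "emeasure ?PJ {x} = ennreal (1 / real CARD('f) ^ (n * M))"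
    if "x \<in> Xs M n" for x
  proof -
    have xk: "x k \<in> space (QQ M :: (nat \<Rightarrow> 'f) measure)" if "k \<in> {1..n}" for k
      using \<open>x \<in> Xs M n\<close> that unfolding space_QQ Xs_def by auto
    have z: "{x} = PiE {1..n} (\<lambda>k. {x k})" using that unfolding Xs_def by (intro singleton_PiE)
    show "{x} \<in> sets ?PJ" unfolding z by (intro sets_PiM_I_finite emeasure_QQ_single xk) auto
    have "emeasure ?PJ {x} = (\<Prod>k\<in>{1..n}. emeasure (QQ M :: (nat \<Rightarrow> 'f) measure) {x k})"
      unfolding z by (intro emeasure_PiM emeasure_QQ_single xk) auto
    also have "\<dots> = (\<Prod>k\<in>{1..n}. ennreal (1 / real CARD('f) ^ M))"
      by (intro prod.cong refl emeasure_QQ_single xk) auto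
    also have "\<dots> = ennreal (1 / real CARD('f) ^ (n * M))"
      by (simp add: ennreal_power power_one_over flip: power_mult) (simp add: mult.commute)
    finally show "emeasure ?PJ {x} = ennreal (1 / real CARD('f) ^ (n * M))" .
  qed
  have finS: "finite S" using finite_subset[OF assms finite_Xs] .
  have "S = (\<Union>x\<in>S. {x})" by auto
  also have "\<dots> \<in> sets ?PJ" using finS single(1) assms by (intro sets.finite_UN) auto
  finally show "S \<in> sets ?PJ" .
  have "measure ?PJ S = (\<Sum>x\<in>S. measure ?PJ {x})"
    using finS single assms by (intro measure_eq_sum_singleton) auto
  also have "\<dots> = (\<Sum>x\<in>S. 1 / real CARD('f) ^ (n * M))"
    using single(2) assms by (intro sum.cong refl) (auto simp: measure_def)
  also have "\<dots> = real (card S) / real CARD('f) ^ (n * M)" by simp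
  finally show "measure ?PJ S = real (card S) / real CARD('f) ^ (n * M)" .
qed

lemma seq_prob: "prob_space (seq_measure M :: (nat \<Rightarrow> nat \<Rightarrow> 'f::finite) measure)"
proof -
  interpret product_prob_space "\<lambda>_::nat. QQ M :: (nat \<Rightarrow> 'f) measure" UNIV
    by (intro product_prob_spaceI prob_QQ)
  show ?thesis unfolding seq_measure_def by (rule P.prob_space_axioms)
qed

lemma seq_event:
  assumes "S \<subseteq> Xs M n"
  shows "{a \<in> space (seq_measure M). restrict a {1..n} \<in> S} \<in> sets (seq_measure M :: (nat \<Rightarrow> nat \<Rightarrow> 'f::finite) measure)"
    "measure (seq_measure M :: (nat \<Rightarrow> nat \<Rightarrow> 'f::finite) measure) {a \<in> space (seq_measure M). restrict a {1..n} \<in> S}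
       = real (card S) / real CARD('f) ^ (n * M)"
proof -
  interpret product_prob_space "\<lambda>_::nat. QQ M :: (nat \<Rightarrow> 'f) measure" UNIV
    by (intro product_prob_spaceI prob_QQ)
  let ?PJ = "PiM {1..n} (\<lambda>_. QQ M :: (nat \<Rightarrow> 'f::finite) measure)"
  have meas: "(\<lambda>a. restrict a {1..n}) \<in> measurable (seq_measure M) ?PJ"
    unfolding seq_measure_def by (rule measurable_restrict_subset) auto
  have eq: "{a \<in> space (seq_measure M). restrict a {1..n} \<in> S} = (\<lambda>a. restrict a {1..n}) -` S \<inter> space (seq_measure M)"
    by auto
  show "{a \<in> space (seq_measure M). restrict a {1..n} \<in> S} \<in> sets (seq_measure M :: (nat \<Rightarrow> nat \<Rightarrow> 'f::finite) measure)"
    unfolding eq by (rule measurable_sets[OF meas PJ_facts(1)[OF assms]])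
  have 1: "measure (seq_measure M :: (nat \<Rightarrow> nat \<Rightarrow> 'f::finite) measure) ((\<lambda>a. restrict a {1..n}) -` S \<inter> space (seq_measure M))
      = measure (distr (seq_measure M) ?PJ (\<lambda>a. restrict a {1..n})) S"
    by (rule measure_distr[OF meas PJ_facts(1)[OF assms], symmetric])
  have 2: "distr (seq_measure M) ?PJ (\<lambda>a. restrict a {1..n}) = ?PJ"
    unfolding seq_measure_def by (rule distr_PiM_restrict_finite) auto
  show "measure (seq_measure M :: (nat \<Rightarrow> nat \<Rightarrow> 'f::finite) measure) {a \<in> space (seq_measure M). restrict a {1..n} \<in> S}
       = real (card S) / real CARD('f) ^ (n * M)" unfolding eq 1 2 by (rule PJ_facts(2)[OF assms])
qed

lemma BC:
  fixes S :: "nat \<Rightarrow> (nat \<Rightarrow> nat \<Rightarrow> 'f::finite) set" and r :: real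
  assumes S: "\<And>n. S n \<subseteq> Xs M n"
    and card: "\<And>n. real (card (S n)) \<le> r ^ n * real CARD('f) ^ (n * M)"
    and r: "0 \<le> r" "r < 1"
  shows "AE a in (seq_measure M :: (nat \<Rightarrow> nat \<Rightarrow> 'f) measure).
           eventually (\<lambda>n. restrict a {1..n} \<notin> S n) sequentially"
proof -
  interpret P: prob_space "seq_measure M :: (nat \<Rightarrow> nat \<Rightarrow> 'f) measure" by (rule seq_prob)
  define A where "A n = {a \<in> space (seq_measure M :: (nat \<Rightarrow> nat \<Rightarrow> 'f) measure). restrict a {1..n} \<in> S n}" for n
  have "AE x in (seq_measure M :: (nat \<Rightarrow> nat \<Rightarrow> 'f) measure).
          eventually (\<lambda>n. x \<in> space (seq_measure M) - A n) sequentially"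
  proof (rule borel_cantelli_AE1)
    show "A n \<in> sets (seq_measure M :: (nat \<Rightarrow> nat \<Rightarrow> 'f) measure)" for n
      unfolding A_def by (rule seq_event(1)[OF S])
    show "emeasure (seq_measure M :: (nat \<Rightarrow> nat \<Rightarrow> 'f) measure) (A n) < \<infinity>" for n
      using P.emeasure_finite[of "A n"] by (simp add: less_top[symmetric])
    have q: "0 < real CARD('f) ^ (n * M)" for n by simp
    show "summable (\<lambda>n. measure (seq_measure M :: (nat \<Rightarrow> nat \<Rightarrow> 'f) measure) (A n))"
    proof (rule summable_comparison_test)
      show "summable (\<lambda>n. r ^ n)" using r by (intro summable_geometric) auto
      have "norm (measure (seq_measure M :: (nat \<Rightarrow> nat \<Rightarrow> 'f) measure) (A n)) \<le> r ^ n" for n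
      proof -
        have "measure (seq_measure M :: (nat \<Rightarrow> nat \<Rightarrow> 'f) measure) (A n) = real (card (S n)) / real CARD('f) ^ (n * M)"
          unfolding A_def by (rule seq_event(2)[OF S])
        also have "\<dots> \<le> r ^ n" using card[of n] q[of n] by (simp add: divide_le_eq)
        finally show ?thesis by simp
      qed
      then show "\<exists>N. \<forall>n\<ge>N. norm (measure (seq_measure M :: (nat \<Rightarrow> nat \<Rightarrow> 'f) measure) (A n)) \<le> r ^ n"
        by blast
    qed
  qed
  then show ?thesis
    by (rule eventually_mono) (erule eventually_mono, simp add: A_def)
qed

lemma pow_bound:
  fixes q d :: real
  assumes "1 \<le> q" "real e \<le> real k - d * real n"
  shows "q ^ e \<le> (q powr (-d)) ^ n * q ^ k"
proof -
  have q0: "0 < q" using assms(1) by simp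
  have "q ^ e = q powr real e" using q0 by (simp add: powr_realpow)
  also have "\<dots> \<le> q powr (real k - d * real n)" using assms by (intro powr_mono) auto
  also have "\<dots> = q powr (real n * (-d)) * q powr real k"
    by (simp add: powr_add[symmetric] algebra_simps)
  also have "\<dots> = (q powr (-d)) ^ n * q ^ k" using q0 by (simp add: powr_power powr_realpow)
  finally show ?thesis .
qed

lemma dev_arith:
  fixes L n :: nat and \<theta> \<delta> :: real
  assumes "\<theta> * n - \<delta> * n - 1 < L" "L \<le> \<theta> * n + \<delta> * n + 1" "2 \<le> \<delta> * n" "n > 0"
  shows "- (2 * \<delta>) \<le> real_of_int (int L - \<lceil>\<theta> * n\<rceil>) / real n"
    "real_of_int (int L - \<lceil>\<theta> * n\<rceil>) / real n \<le> 2 * \<delta>"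
proof -
  have c1: "\<theta> * n \<le> real_of_int \<lceil>\<theta> * n\<rceil>" and c2: "real_of_int \<lceil>\<theta> * n\<rceil> < \<theta> * n + 1"
    using ceiling_correct[of "\<theta> * n"] by auto
  have eqc: "real_of_int (int L - \<lceil>\<theta> * n\<rceil>) = real L - real_of_int \<lceil>\<theta> * n\<rceil>" by simp
  have n: "0 < real n" using assms(4) by simp
  have "- (2 * \<delta>) * real n \<le> real_of_int (int L - \<lceil>\<theta> * n\<rceil>)" using assms(1,3) c2 eqc by linarith
  then show "- (2 * \<delta>) \<le> real_of_int (int L - \<lceil>\<theta> * n\<rceil>) / real n" using n by (simp add: le_divide_eq)
  have "real_of_int (int L - \<lceil>\<theta> * n\<rceil>) \<le> 2 * \<delta> * real n" using assms(2,3) c1 eqc by linarith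
  then show "real_of_int (int L - \<lceil>\<theta> * n\<rceil>) / real n \<le> 2 * \<delta>" using n by (simp add: divide_le_eq)
qed

theorem mainTheorem15:
  fixes M :: nat and \<epsilon> :: real
  assumes "M \<ge> 1" and "\<epsilon> > 0"
  shows "AE a in (seq_measure M :: (nat \<Rightarrow> nat \<Rightarrow> 'f::{finite,field}) measure).
           ereal (- \<epsilon>) < liminf (\<lambda>n. ereal (real_of_int (lc_dev M a n) / real n)) \<and>
           liminf (\<lambda>n. ereal (real_of_int (lc_dev M a n) / real n))
             \<le> limsup (\<lambda>n. ereal (real_of_int (lc_dev M a n) / real n)) \<and>
           limsup (\<lambda>n. ereal (real_of_int (lc_dev M a n) / real n)) < ereal \<epsilon>"
proof -
  define q where "q = real CARD('f)"
  have "card {0, 1::'f} \<le> CARD('f)" by (rule card_mono) auto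
  then have q2: "2 \<le> q" unfolding q_def by simp
  define \<delta> where "\<delta> = min (\<epsilon> / 4) (1 / (2 * (real M + 1)))"
  have \<delta>0: "0 < \<delta>" unfolding \<delta>_def using assms by simp
  have \<delta>1: "\<delta> \<le> \<epsilon> / 4" "\<delta> \<le> 1 / (2 * (real M + 1))" unfolding \<delta>_def by auto
  define \<theta> where "\<theta> = real M / (real M + 1)"
  have M1: "1 \<le> real M" using assms by simp
  have th1: "\<theta> * (real M + 1) = real M" unfolding \<theta>_def using M1 by simp
  have \<delta>M: "\<delta> * (real M + 1) \<le> 1 / 2" using \<delta>1(2) M1 by (simp add: field_simps)
  have thd1: "\<theta> - \<delta> \<ge> 0"
  proof -
    have "(\<theta> - \<delta>) * (real M + 1) \<ge> 0" using th1 \<delta>M M1 by (simp add: algebra_simps)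
    then show ?thesis using M1 by (simp add: zero_le_mult_iff)
  qed
  have thd2: "\<theta> + \<delta> \<le> 1"
  proof -
    have "(\<theta> + \<delta>) * (real M + 1) \<le> 1 * (real M + 1)" using th1 \<delta>M M1 by (simp add: algebra_simps)
    then show ?thesis using M1 by (simp add: mult_le_cancel_right)
  qed
  define d where "d = \<delta> * (real M + 1)"
  define r where "r = q powr (- d)"
  have r: "0 \<le> r" "r < 1" unfolding r_def d_def using q2 \<delta>0 M1
    by (auto intro!: powr_less_one simp: zero_less_mult_iff)
  define lo where "lo n = nat \<lfloor>(\<theta> - \<delta>) * real n\<rfloor>" for n :: nat
  define hi where "hi n = nat \<lceil>(\<theta> + \<delta>) * real n\<rceil>" for n :: nat
  have lo1: "real (lo n) \<le> (\<theta> - \<delta>) * real n" for n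
    unfolding lo_def using thd1 by (simp add: of_nat_nat)
  have lo2: "(\<theta> - \<delta>) * real n - 1 < real (lo n)" for n
    unfolding lo_def using thd1 by (simp add: of_nat_nat)
  have lo3: "lo n \<le> n" for n
  proof -
    have "\<theta> - \<delta> \<le> 1" using thd2 \<delta>0 by linarith
    then have "(\<theta> - \<delta>) * real n \<le> 1 * real n" by (intro mult_right_mono) auto
    then have "(\<theta> - \<delta>) * real n \<le> real n" by simp
    then show ?thesis using lo1[of n] by linarith
  qed
  have hi1: "(\<theta> + \<delta>) * real n \<le> real (hi n)" for n
  proof -
    have "0 \<le> (\<theta> + \<delta>) * real n" using thd1 \<delta>0 by simp
    then have "0 \<le> \<lceil>(\<theta> + \<delta>) * real n\<rceil>" by linarith
    then have "real (hi n) = real_of_int \<lceil>(\<theta> + \<delta>) * real n\<rceil>" unfolding hi_def by simp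
    then show ?thesis by linarith
  qed
  have hi2: "real (hi n) < (\<theta> + \<delta>) * real n + 1" for n
    unfolding hi_def using thd1 \<delta>0 ceiling_correct[of "(\<theta> + \<delta>) * real n"] by (simp add: of_nat_nat)
  have hi3: "hi n \<le> n" for n
  proof -
    have "(\<theta> + \<delta>) * real n \<le> 1 * real n" using thd2 by (intro mult_right_mono) auto
    then have "(\<theta> + \<delta>) * real n \<le> real n" by simp
    then show ?thesis unfolding hi_def by (simp add: ceiling_le_iff nat_le_iff)
  qed
  define Slo where "Slo n = {x \<in> (Xs M n :: (nat \<Rightarrow> nat \<Rightarrow> 'f) set). lin_rec M x n (lo n)}" for n
  define Shi where "Shi n = {x \<in> (Xs M n :: (nat \<Rightarrow> nat \<Rightarrow> 'f) set). \<not> lin_rec M x n (hi n)}" for n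
  have Slo_card: "real (card (Slo n)) \<le> r ^ n * real CARD('f) ^ (n * M)" for n
  proof -
    have "card (Slo n) \<le> CARD('f) ^ lo n * CARD('f) ^ (lo n * M)"
      unfolding Slo_def by (rule card_low[OF lo3])
    then have "real (card (Slo n)) \<le> q ^ (lo n * (M + 1))"
      unfolding q_def by (simp add: power_add[symmetric] algebra_simps)
    also have "\<dots> \<le> r ^ n * q ^ (n * M)" unfolding r_def
    proof (rule pow_bound)
      show "1 \<le> q" using q2 by simp
      have "real (lo n) * (real M + 1) \<le> (\<theta> - \<delta>) * real n * (real M + 1)"
        using lo1[of n] by (intro mult_right_mono) auto
      also have "\<dots> = (\<theta> * (real M + 1)) * real n - d * real n" unfolding d_def by (simp add: algebra_simps)
      also have "\<dots> = real (n * M) - d * real n" unfolding th1 by simp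
      finally show "real (lo n * (M + 1)) \<le> real (n * M) - d * real n" by (simp add: algebra_simps)
    qed
    finally show ?thesis unfolding q_def .
  qed
  have Shi_card: "real (card (Shi n)) \<le> r ^ n * real CARD('f) ^ (n * M)" for n
  proof -
    have "card (Shi n) * CARD('f) ^ hi n \<le> CARD('f) ^ ((n - hi n) * M) * CARD('f) ^ (n * M)"
      unfolding Shi_def by (rule card_high)
    then have "real (card (Shi n)) * q ^ hi n \<le> q ^ ((n - hi n) * M) * q ^ (n * M)"
      unfolding q_def by (metis of_nat_le_iff of_nat_mult of_nat_power)
    also have "q ^ ((n - hi n) * M) \<le> r ^ n * q ^ hi n" unfolding r_def
    proof (rule pow_bound)
      show "1 \<le> q" using q2 by simp
      have "real ((n - hi n) * M) = (real n - real (hi n)) * real M" using hi3[of n] by (simp add: of_nat_diff)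
      also have "\<dots> \<le> real (hi n) - d * real n"
      proof -
        have "(\<theta> + \<delta>) * real n * (real M + 1) \<le> real (hi n) * (real M + 1)"
          using hi1[of n] by (intro mult_right_mono) auto
        moreover have "(\<theta> + \<delta>) * real n * (real M + 1) = (\<theta> * (real M + 1)) * real n + d * real n"
          unfolding d_def by (simp add: algebra_simps)
        ultimately show ?thesis unfolding th1 by (simp add: algebra_simps)
      qed
      finally show "real ((n - hi n) * M) \<le> real (hi n) - d * real n" .
    qed
    finally have "real (card (Shi n)) * q ^ hi n \<le> (r ^ n * q ^ (n * M)) * q ^ hi n"
      using q2 by (simp add: algebra_simps mult_right_mono)
    then have "real (card (Shi n)) \<le> r ^ n * q ^ (n * M)"
      using q2 by (simp add: mult_le_cancel_right)
    then show ?thesis unfolding q_def .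
  qed
  have AE1: "AE a in (seq_measure M :: (nat \<Rightarrow> nat \<Rightarrow> 'f) measure). eventually (\<lambda>n. restrict a {1..n} \<notin> Slo n) sequentially"
    by (rule BC[OF _ Slo_card r]) (auto simp: Slo_def)
  have AE2: "AE a in (seq_measure M :: (nat \<Rightarrow> nat \<Rightarrow> 'f) measure). eventually (\<lambda>n. restrict a {1..n} \<notin> Shi n) sequentially"
    by (rule BC[OF _ Shi_card r]) (auto simp: Shi_def)
  have sp: "space (seq_measure M :: (nat \<Rightarrow> nat \<Rightarrow> 'f) measure) = PiE UNIV (\<lambda>_. PiE {1..M} (\<lambda>_. UNIV))"
    unfolding seq_measure_def by (simp add: space_PiM space_uniform_count_measure)
  show ?thesis
    using AE1 AE2 AE_space
  proof (eventually_elim)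
    case (elim a)
    let ?f = "\<lambda>n. ereal (real_of_int (lc_dev M a n) / real n)"
    have aX: "restrict a {1..n} \<in> Xs M n" for n
      using elim(3) unfolding sp Xs_def by (auto simp: restrict_PiE_iff)
    define N0 where "N0 = nat \<lceil>2 / \<delta>\<rceil> + 1"
    have ev: "eventually (\<lambda>n. ereal (- (\<epsilon> / 2)) \<le> ?f n \<and> ?f n \<le> ereal (\<epsilon> / 2)) sequentially"
      using elim(1) elim(2) eventually_ge_at_top[of N0]
    proof eventually_elim
      case (elim n)
      have n0: "n > 0" using elim(3) unfolding N0_def by simp
      have "2 / \<delta> \<le> real n" using elim(3) unfolding N0_def by linarith
      then have n2: "2 \<le> \<delta> * real n" using \<delta>0 by (simp add: divide_le_eq mult.commute)
      have "\<not> lin_rec M a n (lo n)" using elim(1) aX[of n] lin_rec_restrict[of M a n] unfolding Slo_def by auto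
      then have L1: "lo n < lin_compl M a n" by (rule lin_compl_gt)
      have "lin_rec M a n (hi n)" using elim(2) aX[of n] lin_rec_restrict[of M a n] unfolding Shi_def by auto
      then have L2: "lin_compl M a n \<le> hi n" by (rule lin_compl_le)
      have tn: "real (n * M) / real (M + 1) = \<theta> * real n" unfolding \<theta>_def by (simp add: algebra_simps)
      have A1: "\<theta> * real n - \<delta> * real n - 1 < real (lin_compl M a n)"
      proof -
        have "real (lo n) < real (lin_compl M a n)" using L1 by simp
        then show ?thesis using lo2[of n] by (simp add: algebra_simps)
      qed
      have A2: "real (lin_compl M a n) \<le> \<theta> * real n + \<delta> * real n + 1"
      proof -
        have "real (lin_compl M a n) \<le> real (hi n)" using L2 by simp
        then show ?thesis using hi2[of n] by (simp add: algebra_simps)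
      qed
      have dev: "lc_dev M a n = int (lin_compl M a n) - \<lceil>\<theta> * real n\<rceil>"
        unfolding lc_dev_def tn ..
      note D = dev_arith[OF A1 A2 n2 n0]
      define x where "x = real_of_int (int (lin_compl M a n) - \<lceil>\<theta> * real n\<rceil>) / real n"
      have "- (\<epsilon> / 2) \<le> x" "x \<le> \<epsilon> / 2" using D \<delta>1(1) unfolding x_def by linarith+
      then show ?case unfolding dev x_def[symmetric] by simp
    qed
    have "ereal (- (\<epsilon> / 2)) \<le> liminf ?f"
      by (rule Liminf_bounded) (use ev in \<open>auto elim: eventually_mono\<close>)
    moreover have "limsup ?f \<le> ereal (\<epsilon> / 2)"
      by (rule Limsup_bounded) (use ev in \<open>auto elim: eventually_mono\<close>)
    moreover have "liminf ?f \<le> limsup ?f" by (rule Liminf_le_Limsup) simp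
    moreover have "ereal (- \<epsilon>) < ereal (- (\<epsilon> / 2))" "ereal (\<epsilon> / 2) < ereal \<epsilon>" using assms by auto
    ultimately show ?case by (meson order.strict_trans1 order.strict_trans2)
  qed
qed

end
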